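(* Let $\mathbf{A}\in\mathbb{R}^{m\times n}$ have all rows nonzero, let $b\in\mathcal{R}(\mathbf{A})$, and let $f:\mathbb{R}^n\to\mathbb{R}$ be finite everywhere and $1$-strongly convex. Let $\hat x$ be the unique solution of $\min_x f(x)$ subject to $\mathbf{A}x=b$. Fix a partition of the rows into $M$ blocks and $\alpha\in[0,1]$. Consider the block Bregman–Kaczmarz method (BK): $d^0=0\in\mathbb{R}^n$, $x^0=\nabla f^*(d^0)$, and for $k\ge 0$, choose a block index $i=i_k\in[M]$ at random, independently of the past, with probability $p_i=L_i^\alpha/\sum_{j=1}^M L_j^\alpha$, and set $$d^{k+1}=d^k-\frac{1}{\|\mathbf{A}_{(i)}\|_2^2}\mathbf{A}_{(i)}^\top\big(\mathbf{A}_{(i)}x^k-b_{(i)}\big),\qquad x^{k+1}=\nabla f^*(d^{k+1}).$$ Then for all $k\ge 0$, $$\tfrac12\mathbb{E}\big[\|x^k-\hat x\|_2^2\big]\le \mathbb{E}\big[D_f^{d^k}(x^k,\hat x)\big]\le \frac{2M\bar L_\alpha}{k+4}\,R_{1-\alpha}^2(y^0),$$ where $y^0=0\in\mathbb{R}^m$.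
   Context: Block notation: the index set $[m]$ is partitioned into $M$ consecutive blocks of sizes $m_1,\dots,m_M$ ($\sum_i m_i=m$); writing $\mathbf{I}_m=(\mathbf{U}_1,\dots,\mathbf{U}_M)$ with $\mathbf{U}_i\in\mathbb{R}^{m\times m_i}$, set $\mathbf{A}_{(i)}=\mathbf{U}_i^\top\mathbf{A}$ (the $i$-th row block), $b_{(i)}=\mathbf{U}_i^\top b$, $y_{(i)}=\mathbf{U}_i^\top y$. $L_i=\|\mathbf{A}_{(i)}\|_2^2$ (squared spectral norm), $\bar L_\alpha=\frac1M\sum_{j=1}^M L_j^\alpha$. $f^*$ is the Fenchel conjugate $f^*(x^* )=\sup_y\langle x^*,y\rangle-f(y)$ (differentiable with $1$-Lipschitz gradient). For $x^*\in\partial f(x)$, $D_f^{x^*}(x,y)=f(y)-f(x)-\langle x^*,y-x\rangle$ (Bregman distance). The dual function is $\Psi(y)=f^*(\mathbf{A}^\top y)-b^\top y$ on $\mathbb{R}^m$, with nonempty set of minimizers $\mathcal{Y}^*$. For $\beta\in[0,1]$, $\|y\|_\beta^2=\sum_{i=1}^M L_i^\beta\|y_{(i)}\|_2^2$ and $R_\beta(y^0)=\max_y\{\min_{\hat y\in\mathcal{Y}^*}\|y-\hat y\|_\beta:\ \Psi(y)\le\Psi(y^0)\}$. Expectations are over the random block indices. *)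

theory Defs
  imports "HOL-Analysis.Analysis"
begin

text \<open>The block structure is a map blk from rows to block indices 0..M-1.
 The i-th row block A_(i) is represented by the m x n matrix that keeps the rows
 of block i and zeroes all others (same spectral norm, same A_(i)^T(A_(i)x-b_(i))).\<close>

definition blockmat :: "real^'n^'m \<Rightarrow> ('m \<Rightarrow> nat) \<Rightarrow> nat \<Rightarrow> real^'n^'m" where
  "blockmat A blk i = (\<chi> r. if blk r = i then A $ r else 0)"

definition blockvec :: "real^'m \<Rightarrow> ('m \<Rightarrow> nat) \<Rightarrow> nat \<Rightarrow> real^'m" where
  "blockvec b blk i = (\<chi> r. if blk r = i then b $ r else 0)"

definition spec_norm :: "real^'n^'m \<Rightarrow> real" where
  "spec_norm B = onorm (\<lambda>x. B *v x)"

definition Lblk :: "real^'n^'m \<Rightarrow> ('m \<Rightarrow> nat) \<Rightarrow> nat \<Rightarrow> real" where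
  "Lblk A blk i = (spec_norm (blockmat A blk i))\<^sup>2"

definition Lbar :: "real^'n^'m \<Rightarrow> ('m \<Rightarrow> nat) \<Rightarrow> nat \<Rightarrow> real \<Rightarrow> real" where
  "Lbar A blk M \<alpha> = (1 / real M) * (\<Sum>j<M. Lblk A blk j powr \<alpha>)"

definition prob_blk :: "real^'n^'m \<Rightarrow> ('m \<Rightarrow> nat) \<Rightarrow> nat \<Rightarrow> real \<Rightarrow> nat \<Rightarrow> real" where
  "prob_blk A blk M \<alpha> i = Lblk A blk i powr \<alpha> / (\<Sum>j<M. Lblk A blk j powr \<alpha>)"

definition strongly_convex1 :: "(real^'n \<Rightarrow> real) \<Rightarrow> bool" where
  "strongly_convex1 f \<longleftrightarrow> (\<forall>x y t. 0 \<le> t \<and> t \<le> 1 \<longrightarrow>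
      f (t *\<^sub>R x + (1 - t) *\<^sub>R y) \<le> t * f x + (1 - t) * f y - t * (1 - t) / 2 * (norm (x - y))\<^sup>2)"

definition fconj :: "(real^'n \<Rightarrow> real) \<Rightarrow> real^'n \<Rightarrow> real" where
  "fconj f z = (SUP y. z \<bullet> y - f y)"

definition grad :: "(real^'n \<Rightarrow> real) \<Rightarrow> real^'n \<Rightarrow> real^'n" where
  "grad F d = (SOME g. (F has_derivative (\<lambda>h. g \<bullet> h)) (at d))"

definition bregman :: "(real^'n \<Rightarrow> real) \<Rightarrow> real^'n \<Rightarrow> real^'n \<Rightarrow> real^'n \<Rightarrow> real" where
  "bregman f xs x y = f y - f x - xs \<bullet> (y - x)"

definition bk_step :: "real^'n^'m \<Rightarrow> real^'m \<Rightarrow> ('m \<Rightarrow> nat) \<Rightarrow> (real^'n \<Rightarrow> real)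
    \<Rightarrow> real^'n \<Rightarrow> nat \<Rightarrow> real^'n" where
  "bk_step A b blk f d i =
     d - (1 / Lblk A blk i) *\<^sub>R (transpose (blockmat A blk i) *v
           (blockmat A blk i *v grad (fconj f) d - blockvec b blk i))"

definition bk_d :: "real^'n^'m \<Rightarrow> real^'m \<Rightarrow> ('m \<Rightarrow> nat) \<Rightarrow> (real^'n \<Rightarrow> real)
    \<Rightarrow> nat list \<Rightarrow> real^'n" where
  "bk_d A b blk f is = foldl (bk_step A b blk f) 0 is"

definition bk_x :: "real^'n^'m \<Rightarrow> real^'m \<Rightarrow> ('m \<Rightarrow> nat) \<Rightarrow> (real^'n \<Rightarrow> real)
    \<Rightarrow> nat list \<Rightarrow> real^'n" where
  "bk_x A b blk f is = grad (fconj f) (bk_d A b blk f is)"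

text \<open>Expectation of a function of the first k i.i.d. block indices, each drawn with
 probabilities p_i: a finite sum over all index sequences weighted by their probabilities.\<close>
definition expect_k :: "real^'n^'m \<Rightarrow> ('m \<Rightarrow> nat) \<Rightarrow> nat \<Rightarrow> real \<Rightarrow> nat
    \<Rightarrow> (nat list \<Rightarrow> real) \<Rightarrow> real" where
  "expect_k A blk M \<alpha> k g =
     (\<Sum>is\<in>{is. length is = k \<and> set is \<subseteq> {..<M}}.
        prod_list (map (prob_blk A blk M \<alpha>) is) * g is)"

definition Psi :: "real^'n^'m \<Rightarrow> real^'m \<Rightarrow> (real^'n \<Rightarrow> real) \<Rightarrow> real^'m \<Rightarrow> real" where
  "Psi A b f y = fconj f (transpose A *v y) - b \<bullet> y"

definition Ystar :: "real^'n^'m \<Rightarrow> real^'m \<Rightarrow> (real^'n \<Rightarrow> real) \<Rightarrow> (real^'m) set" where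
  "Ystar A b f = {y. \<forall>y'. Psi A b f y \<le> Psi A b f y'}"

definition bnorm :: "real^'n^'m \<Rightarrow> ('m \<Rightarrow> nat) \<Rightarrow> nat \<Rightarrow> real \<Rightarrow> real^'m \<Rightarrow> real" where
  "bnorm A blk M \<beta> y = sqrt (\<Sum>i<M. Lblk A blk i powr \<beta> * (\<Sum>r\<in>{r. blk r = i}. (y $ r)\<^sup>2))"

definition Rbeta :: "real^'n^'m \<Rightarrow> real^'m \<Rightarrow> (real^'n \<Rightarrow> real) \<Rightarrow> ('m \<Rightarrow> nat) \<Rightarrow> nat
    \<Rightarrow> real \<Rightarrow> real^'m \<Rightarrow> real" where
  "Rbeta A b f blk M \<beta> y0 =
     (SUP y\<in>{y. Psi A b f y \<le> Psi A b f y0}.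
        (INF yh\<in>Ystar A b f. bnorm A blk M \<beta> (y - yh)))"

end

theory Submission
  imports Defs
begin



lemma sc_convex:
  assumes "strongly_convex1 (f::real^'n \<Rightarrow> real)" shows "convex_on UNIV f"
  unfolding convex_on_def
proof (intro conjI allI impI ballI)
  fix x y :: "real^'n" and u v :: real
  assume "0 \<le> u" "0 \<le> v" "u + v = 1"
  then have "f (u *\<^sub>R x + (1 - u) *\<^sub>R y) \<le> u * f x + (1 - u) * f y - u * (1 - u) / 2 * (norm (x - y))\<^sup>2"
    using assms unfolding strongly_convex1_def by auto
  moreover have "u * (1 - u) / 2 * (norm (x - y))\<^sup>2 \<ge> 0"
    using \<open>0 \<le> u\<close> \<open>0 \<le> v\<close> \<open>u + v = 1\<close> by auto
  moreover have "v = 1 - u" using \<open>u + v = 1\<close> by linarith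
  ultimately show "f (u *\<^sub>R x + v *\<^sub>R y) \<le> u * f x + v * f y"
    by simp
qed auto

lemma sc_cont:
  assumes "strongly_convex1 f" shows "continuous_on UNIV f"
  using convex_on_continuous[OF open_UNIV sc_convex[OF assms]] .

lemma sc_ball_bound:
  assumes "strongly_convex1 (f::real^'n \<Rightarrow> real)"
  shows "\<exists>K\<ge>0. \<forall>y. norm (y - c) \<le> 1 \<longrightarrow> \<bar>f y\<bar> \<le> K"
proof -
  have "compact (f ` cball c 1)"
    by (rule compact_continuous_image) (auto intro: continuous_on_subset[OF sc_cont[OF assms]])
  then obtain K where K: "\<forall>z\<in>f ` cball c 1. norm z \<le> K"
    using compact_imp_bounded bounded_iff by blast
  have "\<bar>f c\<bar> \<le> K" using K by auto
  then have "K \<ge> 0" by auto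
  moreover have "\<forall>y. norm (y - c) \<le> 1 \<longrightarrow> \<bar>f y\<bar> \<le> K"
    using K by (auto simp: dist_norm norm_minus_commute)
  ultimately show ?thesis by blast
qed

lemma sc_growth:
  assumes sc: "strongly_convex1 (f::real^'n \<Rightarrow> real)"
  shows "\<exists>K\<ge>0. \<forall>y. f y \<ge> (norm y)\<^sup>2 / 2 - (2*K+1) * norm y - K"
proof -
  obtain K where K0: "K \<ge> 0" and K: "\<And>y. norm y \<le> 1 \<Longrightarrow> \<bar>f y\<bar> \<le> K"
    using sc_ball_bound[OF sc, of 0] by auto
  have "f y \<ge> (norm y)\<^sup>2 / 2 - (2*K+1) * norm y - K" for y
  proof (cases "norm y \<le> 1")
    case True
    have "norm y * norm y \<le> norm y * 1" using True by (intro mult_left_mono) auto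
    then have "(norm y)\<^sup>2 / 2 \<le> norm y" by (simp add: power2_eq_square) (use norm_ge_zero[of y] in linarith)
    moreover have "K * norm y \<ge> 0" using K0 by simp
    moreover have "(2*K+1)*norm y = 2*(K*norm y) + norm y" by (simp add: algebra_simps)
    ultimately show ?thesis using K[OF True] K0 by linarith
  next
    case False
    define r where "r = norm y"
    define t where "t = 1 / r"
    have r1: "r > 1" using False r_def by auto
    have t01: "0 \<le> t" "t \<le> 1" using r1 t_def by auto
    have "f (t *\<^sub>R y + (1 - t) *\<^sub>R 0) \<le> t * f y + (1 - t) * f 0 - t * (1 - t) / 2 * (norm (y - 0))\<^sup>2"
      using sc t01 unfolding strongly_convex1_def by blast
    moreover have "norm (t *\<^sub>R y) \<le> 1" using r1 by (simp add: t_def r_def)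
    ultimately have A1: "-K \<le> t * f y + (1 - t) * f 0 - t * (1 - t) / 2 * r\<^sup>2"
      using K[of "t *\<^sub>R y"] by (simp add: r_def)
    have "(1 - t) * f 0 \<le> (1 - t) * K" using K[of 0] t01 by (intro mult_left_mono) auto
    with A1 have A2: "t * f y \<ge> -K - (1 - t) * K + t * (1 - t) / 2 * r\<^sup>2" by linarith
    have "f y = r * (t * f y)" using r1 by (simp add: t_def)
    also have "\<dots> \<ge> r * (-K - (1 - t) * K + t * (1 - t) / 2 * r\<^sup>2)"
      using A2 r1 by (intro mult_left_mono) auto
    finally have A3: "f y \<ge> r * (-K - (1 - t) * K + t * (1 - t) / 2 * r\<^sup>2)" .
    have A4: "r * (-K - (1 - t) * K + t * (1 - t) / 2 * r\<^sup>2) = -K*r - (r - 1) * K + (r - 1) / 2 * r"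
      using r1 by (simp add: t_def field_simps power2_eq_square)
    have A5: "(r - 1) * K \<le> r * K" using K0 by (simp add: algebra_simps)
    have A6: "f y \<ge> - (r*K) - (r - 1) * K + (r - 1) / 2 * r" using A3 A4 by (simp add: mult.commute)
    have A7: "(r - 1) / 2 * r = r\<^sup>2/2 - r/2" "(r - 1) * K = r * K - K"
      by (simp_all add: power2_eq_square field_simps)
    have "f y \<ge> r\<^sup>2/2 - r/2 - 2 * (r * K)" using A6 A7 K0 by linarith
    moreover have "(2*K+1)*r = 2*(r*K) + r" by (simp add: algebra_simps)
    moreover have "r * K \<ge> 0" using K0 r1 by simp
    ultimately show ?thesis using K0 r1 unfolding r_def by linarith
  qed
  then show ?thesis using K0 by blast
qed




definition ismax :: "(real^'n \<Rightarrow> real) \<Rightarrow> real^'n \<Rightarrow> real^'n \<Rightarrow> bool" where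
  "ismax f z X \<longleftrightarrow> (\<forall>y. z \<bullet> y - f y \<le> z \<bullet> X - f X)"

lemma conj_max_exists:
  assumes sc: "strongly_convex1 (f::real^'n \<Rightarrow> real)"
  shows "\<exists>X. ismax f z X"
proof -
  obtain K where K0: "K \<ge> 0" and K: "\<And>y. f y \<ge> (norm y)\<^sup>2 / 2 - (2*K+1) * norm y - K"
    using sc_growth[OF sc] by blast
  define K2 where "K2 = \<bar>f 0\<bar>"
  define a where "a = norm z + 2*K + 1"
  define \<rho> where "\<rho> = 2*a + 2*K + 2*K2 + 2"
  have a0: "a \<ge> 1" using K0 by (simp add: a_def)
  have "continuous_on (cball 0 \<rho>) (\<lambda>y. z \<bullet> y - f y)"
    by (intro continuous_intros continuous_on_subset[OF sc_cont[OF sc]]) auto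
  moreover have "cball (0::real^'n) \<rho> \<noteq> {}" using a0 K0 by (simp add: \<rho>_def K2_def)
  ultimately obtain X where X: "X \<in> cball 0 \<rho>" and Xm: "\<And>y. y \<in> cball 0 \<rho> \<Longrightarrow> z \<bullet> y - f y \<le> z \<bullet> X - f X"
    using continuous_attains_sup[of "cball 0 \<rho>" "\<lambda>y. z \<bullet> y - f y"] by auto
  have h0: "z \<bullet> 0 - f 0 \<le> z \<bullet> X - f X" using Xm[of 0] a0 K0 by (simp add: \<rho>_def K2_def)
  have "z \<bullet> y - f y \<le> z \<bullet> X - f X" for y
  proof (cases "y \<in> cball 0 \<rho>")
    case True then show ?thesis using Xm by blast
  next
    case False
    define r where "r = norm y"
    have r: "r > \<rho>" using False by (simp add: r_def)
    have "z \<bullet> y \<le> norm z * r" unfolding r_def by (rule norm_cauchy_schwarz)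
    then have "z \<bullet> y - f y \<le> norm z * r - (r\<^sup>2 / 2 - (2*K+1) * r - K)" using K[of y] by (simp add: r_def)
    also have "\<dots> = a * r - r\<^sup>2/2 + K" by (simp add: a_def algebra_simps)
    also have "\<dots> < - K2"
    proof -
      have r1: "r \<ge> 1" using r a0 K0 by (simp add: \<rho>_def K2_def)
      have "r / 2 - a \<ge> K + K2 + 1" using r by (simp add: \<rho>_def)
      then have "r * (r/2 - a) \<ge> 1 * (K + K2 + 1)" using r1 K0 by (intro mult_mono) (auto simp: K2_def)
      then show ?thesis by (simp add: power2_eq_square algebra_simps)
    qed
    also have "\<dots> \<le> z \<bullet> X - f X" using h0 by (simp add: K2_def)
    finally show ?thesis by simp
  qed
  then show ?thesis unfolding ismax_def by blast
qed

lemma ismax_quad: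
  assumes sc: "strongly_convex1 (f::real^'n \<Rightarrow> real)" and m: "ismax f z X"
  shows "f y \<ge> f X + z \<bullet> (y - X) + (norm (y - X))\<^sup>2 / 2"
proof (rule ccontr)
  define g where "g = (\<lambda>y. f y - z \<bullet> y)"
  define d where "d = (norm (y - X))\<^sup>2"
  assume "\<not> ?thesis"
  then have lt: "g y - g X < d / 2" by (simp add: g_def d_def inner_diff_right)
  have gm: "\<And>w. g w \<ge> g X" using m unfolding ismax_def g_def by (smt (verit))
  have key: "g y - g X \<ge> (1 - t) / 2 * d" if t: "0 < t" "t \<le> 1" for t
  proof -
    have "f (t *\<^sub>R y + (1 - t) *\<^sub>R X) \<le> t * f y + (1 - t) * f X - t * (1 - t) / 2 * d"
      using sc t unfolding strongly_convex1_def d_def by auto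
    moreover have "z \<bullet> (t *\<^sub>R y + (1 - t) *\<^sub>R X) = t * (z \<bullet> y) + (1 - t) * (z \<bullet> X)"
      by (simp add: inner_add_right)
    ultimately have "g (t *\<^sub>R y + (1 - t) *\<^sub>R X) \<le> t * g y + (1 - t) * g X - t * (1 - t) / 2 * d"
      by (simp add: g_def algebra_simps)
    with gm[of "t *\<^sub>R y + (1 - t) *\<^sub>R X"] have "t * (g y - g X) \<ge> t * ((1 - t) / 2 * d)"
      by (simp add: algebra_simps)
    then show ?thesis using t by simp
  qed
  have d0: "d > 0"
  proof -
    have "d \<ge> 0" by (simp add: d_def)
    moreover have "d \<noteq> 0"
    proof
      assume "d = 0"
      then show False using lt gm[of y] by simp
    qed
    ultimately show ?thesis by simp
  qed
  define \<delta> where "\<delta> = d / 2 - (g y - g X)"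
  have \<delta>0: "\<delta> > 0" using lt by (simp add: \<delta>_def)
  define t where "t = min 1 (\<delta> / d)"
  have t: "0 < t" "t \<le> 1" using \<delta>0 d0 by (auto simp: t_def)
  have "t * d \<le> \<delta>" using d0 by (simp add: t_def min_def field_simps)
  then have "(1 - t) / 2 * d > g y - g X" using \<delta>0 by (simp add: \<delta>_def algebra_simps)
  with key[OF t] show False by simp
qed

lemma ismax_conj:
  assumes m: "ismax f z X"
  shows "fconj f z = z \<bullet> X - f X"
  unfolding fconj_def
  by (rule cSup_eq_maximum) (use m in \<open>auto simp: ismax_def\<close>)

lemma fenchel_young:
  assumes sc: "strongly_convex1 (f::real^'n \<Rightarrow> real)"
  shows "z \<bullet> y - f y \<le> fconj f z"
proof -
  obtain X where "ismax f z X" using conj_max_exists[OF sc] by blast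
  then show ?thesis using ismax_conj[of f z X] by (simp add: ismax_def)
qed

lemma conj_lower:
  assumes sc: "strongly_convex1 (f::real^'n \<Rightarrow> real)" and m: "ismax f z X"
  shows "fconj f z' \<ge> fconj f z + (z' - z) \<bullet> X"
  using fenchel_young[OF sc, of z' X] ismax_conj[OF m] by (simp add: inner_diff_left)

lemma conj_upper:
  assumes sc: "strongly_convex1 (f::real^'n \<Rightarrow> real)" and m: "ismax f z X"
  shows "fconj f z' \<le> fconj f z + (z' - z) \<bullet> X + (norm (z' - z))\<^sup>2 / 2"
proof -
  obtain X' where m': "ismax f z' X'" using conj_max_exists[OF sc] by blast
  have q: "f X' \<ge> f X + z \<bullet> (X' - X) + (norm (X' - X))\<^sup>2 / 2" by (rule ismax_quad[OF sc m])
  have "(z' - z) \<bullet> (X' - X) \<le> norm (z' - z) * norm (X' - X)" by (rule norm_cauchy_schwarz)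
  moreover have "norm (z' - z) * norm (X' - X) \<le> (norm (z' - z))\<^sup>2 / 2 + (norm (X' - X))\<^sup>2 / 2"
    using sum_squares_bound[of "norm (z' - z)" "norm (X' - X)"] by (simp add: power2_eq_square)
  ultimately have cs: "(z' - z) \<bullet> (X' - X) - (norm (X' - X))\<^sup>2 / 2 \<le> (norm (z' - z))\<^sup>2 / 2" by linarith
  have "fconj f z' = z' \<bullet> X' - f X'" by (rule ismax_conj[OF m'])
  also have "\<dots> \<le> z' \<bullet> X' - f X - z \<bullet> (X' - X) - (norm (X' - X))\<^sup>2 / 2" using q by linarith
  also have "\<dots> = (z \<bullet> X - f X) + (z' - z) \<bullet> X + ((z' - z) \<bullet> (X' - X) - (norm (X' - X))\<^sup>2 / 2)"
    by (simp add: inner_diff_left inner_diff_right algebra_simps)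
  also have "\<dots> \<le> fconj f z + (z' - z) \<bullet> X + (norm (z' - z))\<^sup>2 / 2"
    using cs ismax_conj[OF m] by linarith
  finally show ?thesis .
qed

lemma conj_deriv:
  assumes sc: "strongly_convex1 (f::real^'n \<Rightarrow> real)" and m: "ismax f z X"
  shows "(fconj f has_derivative (\<lambda>h. X \<bullet> h)) (at z)"
  unfolding has_derivative_at'
proof (intro conjI allI impI)
  show "bounded_linear (\<lambda>h. X \<bullet> h)" by (rule bounded_linear_inner_right)
  fix e :: real assume e: "e > 0"
  show "\<exists>d>0. \<forall>x'. 0 < norm (x' - z) \<and> norm (x' - z) < d \<longrightarrow>
        norm (fconj f x' - fconj f z - X \<bullet> (x' - z)) / norm (x' - z) < e"
  proof (intro exI[of _ "2*e"] conjI allI impI)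
    fix x' assume x': "0 < norm (x' - z) \<and> norm (x' - z) < 2 * e"
    have lo: "fconj f x' - fconj f z - X \<bullet> (x' - z) \<ge> 0" using conj_lower[OF sc m, of x'] by (simp add: inner_commute)
    have up: "fconj f x' - fconj f z - X \<bullet> (x' - z) \<le> (norm (x' - z))\<^sup>2 / 2" using conj_upper[OF sc m, of x'] by (simp add: inner_commute)
    have "norm (fconj f x' - fconj f z - X \<bullet> (x' - z)) / norm (x' - z) \<le> ((norm (x' - z))\<^sup>2 / 2) / norm (x' - z)"
      using lo up x' by (intro divide_right_mono) auto
    also have "\<dots> = norm (x' - z) / 2" using x' by (simp add: power2_eq_square)
    also have "\<dots> < e" using x' by simp
    finally show "norm (fconj f x' - fconj f z - X \<bullet> (x' - z)) / norm (x' - z) < e" .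
  qed (use e in simp)
qed

lemma grad_conj:
  assumes sc: "strongly_convex1 (f::real^'n \<Rightarrow> real)" and m: "ismax f z X"
  shows "grad (fconj f) z = X"
proof -
  have d: "(fconj f has_derivative (\<lambda>h. X \<bullet> h)) (at z)" by (rule conj_deriv[OF sc m])
  then have "(fconj f has_derivative (\<lambda>h. grad (fconj f) z \<bullet> h)) (at z)"
    unfolding grad_def by (rule someI)
  from has_derivative_unique[OF this d] have "(\<lambda>h. grad (fconj f) z \<bullet> h) = (\<lambda>h. X \<bullet> h)" .
  then have "grad (fconj f) z \<bullet> (grad (fconj f) z - X) = X \<bullet> (grad (fconj f) z - X)" by metis
  then have "(grad (fconj f) z - X) \<bullet> (grad (fconj f) z - X) = 0" by (simp add: inner_diff_left)
  then show ?thesis by simp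
qed

lemma grad_ismax:
  assumes sc: "strongly_convex1 (f::real^'n \<Rightarrow> real)"
  shows "ismax f z (grad (fconj f) z)"
proof -
  obtain X where m: "ismax f z X" using conj_max_exists[OF sc] by blast
  then show ?thesis using grad_conj[OF sc m] by simp
qed




locale bk =
  fixes A :: "real^'n^'m" and b :: "real^'m" and f :: "real^'n \<Rightarrow> real"
    and blk :: "'m \<Rightarrow> nat" and M :: nat and \<alpha> :: real and xhat :: "real^'n"
  assumes rows_nonzero: "\<forall>r. A $ r \<noteq> 0"
    and f_sc: "strongly_convex1 f"
    and blk_range: "\<forall>r. blk r < M"
    and blk_nonempty: "\<forall>i<M. \<exists>r. blk r = i"
    and alpha: "0 \<le> \<alpha>" "\<alpha> \<le> 1"
    and xhat_feas: "A *v xhat = b"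
    and xhat_min: "\<forall>x. A *v x = b \<longrightarrow> f xhat \<le> f x"
    and dual_sol: "Ystar A b f \<noteq> {}"
begin

abbreviation P where "P i v \<equiv> blockvec v blk i"
abbreviation L where "L i \<equiv> Lblk A blk i"
abbreviation X where "X d \<equiv> grad (fconj f) d"
definition g where "g y = A *v X (transpose A *v y) - b"
definition ystep where "ystep y i = y - (1 / L i) *\<^sub>R P i (g y)"
abbreviation Ps where "Ps y \<equiv> Psi A b f y"

lemma P_comp: "P i v $ r = (if blk r = i then v $ r else 0)"
  by (simp add: blockvec_def)

lemma B1: "blockmat A blk i *v x = P i (A *v x)"
  by (simp add: vec_eq_iff blockmat_def blockvec_def matrix_vector_mult_def)

lemma B2: "transpose (blockmat A blk i) *v v = transpose A *v P i v"
  by (simp add: vec_eq_iff blockmat_def blockvec_def vector_matrix_mult_def) (intro allI sum.cong, auto)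

lemma P_diff: "P i (u - w) = P i u - P i w"
  by (simp add: vec_eq_iff blockvec_def)

lemma P_idem: "P i (P i v) = P i v"
  by (simp add: vec_eq_iff blockvec_def)

lemma P_scale: "P i (c *\<^sub>R v) = c *\<^sub>R P i v"
  by (simp add: vec_eq_iff blockvec_def)

lemma sum_blocks: "(\<Sum>i<M. \<Sum>r\<in>{r. blk r = i}. h r) = (\<Sum>r\<in>UNIV. h r)"
proof -
  have "(\<Sum>i<M. \<Sum>r\<in>{r \<in> UNIV. blk r = i}. h r) = (\<Sum>r\<in>UNIV. h r)"
    by (rule sum.group) (use blk_range in auto)
  then show ?thesis by simp
qed

lemma inner_P: "P i u \<bullet> w = (\<Sum>r\<in>{r. blk r = i}. u $ r * w $ r)"
proof -
  have "P i u \<bullet> w = (\<Sum>r\<in>UNIV. if blk r = i then u $ r * w $ r else 0)"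
    by (auto simp: inner_vec_def blockvec_def intro!: sum.cong)
  also have "\<dots> = (\<Sum>r\<in>{r. blk r = i}. u $ r * w $ r)"
    by (simp add: sum.If_cases)
  finally show ?thesis .
qed

lemma inner_blocks: "u \<bullet> w = (\<Sum>i<M. P i u \<bullet> P i w)"
proof -
  have "(\<Sum>i<M. P i u \<bullet> P i w) = (\<Sum>i<M. \<Sum>r\<in>{r. blk r = i}. u $ r * w $ r)"
  proof (rule sum.cong[OF refl])
    fix i show "P i u \<bullet> P i w = (\<Sum>r\<in>{r. blk r = i}. u $ r * w $ r)"
      unfolding inner_P by (rule sum.cong) (auto simp: blockvec_def)
  qed
  also have "\<dots> = u \<bullet> w" by (simp add: sum_blocks inner_vec_def)
  finally show ?thesis by simp
qed

lemma inner_P2: "P i u \<bullet> w = P i u \<bullet> P i w"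
  unfolding inner_P by (rule sum.cong) (auto simp: blockvec_def)

lemma normsq_P: "(norm (P i v))\<^sup>2 = (\<Sum>r\<in>{r. blk r = i}. (v $ r)\<^sup>2)"
  unfolding power2_norm_eq_inner inner_P by (rule sum.cong) (auto simp: blockvec_def power2_eq_square)

lemma normsq_blocks: "(norm v)\<^sup>2 = (\<Sum>i<M. (norm (P i v))\<^sup>2)"
  unfolding power2_norm_eq_inner by (rule inner_blocks)

lemma sum_P: "(\<Sum>i<M. P i v) = v"
proof -
  have "(\<Sum>i<M. P i v) $ r = v $ r" for r
  proof -
    have "(\<Sum>i<M. P i v) $ r = (\<Sum>i<M. if blk r = i then v $ r else 0)"
      by (simp add: sum_component blockvec_def)
    also have "\<dots> = v $ r" using blk_range by (simp add: sum.delta)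
    finally show ?thesis .
  qed
  then show ?thesis by (simp add: vec_eq_iff)
qed

lemma transpose_bound:
  fixes B :: "real^'n^'m"
  shows "norm (transpose B *v v) \<le> spec_norm B * norm v"
proof -
  define w where "w = transpose B *v v"
  have "(norm w)\<^sup>2 = v \<bullet> (B *v w)"
    by (simp add: w_def power2_norm_eq_inner dot_lmul_matrix)
  also have "\<dots> \<le> norm v * norm (B *v w)" by (rule norm_cauchy_schwarz)
  also have "\<dots> \<le> norm v * (spec_norm B * norm w)"
    unfolding spec_norm_def by (intro mult_left_mono onorm) auto
  finally have *: "norm w * norm w \<le> norm w * (spec_norm B * norm v)"
    by (simp add: power2_eq_square algebra_simps)
  show ?thesis
  proof (cases "norm w = 0")
    case True
    have "spec_norm B \<ge> 0" unfolding spec_norm_def by (intro onorm_pos_le) auto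
    then show ?thesis using True by (simp add: w_def)
  next
    case False
    then show ?thesis using * by (simp add: w_def)
  qed
qed

lemma L_pos: assumes "i < M" shows "L i > 0"
proof -
  obtain r where r: "blk r = i" using blk_nonempty assms by blast
  define B where "B = blockmat A blk i"
  have "(B *v (A $ r)) $ r = A $ r \<bullet> A $ r"
    by (simp add: B_def blockmat_def matrix_vector_mult_def r inner_vec_def)
  then have "(B *v (A $ r)) $ r > 0" using rows_nonzero by simp
  then have "B *v (A $ r) \<noteq> 0" by auto
  then have "0 < norm (B *v (A $ r))" by simp
  also have "\<dots> \<le> spec_norm B * norm (A $ r)"
    unfolding spec_norm_def by (intro onorm) auto
  finally have "spec_norm B > 0" using rows_nonzero by (simp add: zero_less_mult_iff)
  then show ?thesis by (simp add: Lblk_def B_def)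
qed

lemma bk_step_eq: "bk_step A b blk f (transpose A *v y) i = transpose A *v ystep y i"
  unfolding bk_step_def ystep_def B1 B2 g_def
  by (simp add: P_diff[symmetric] P_idem P_scale matrix_vector_mult_diff_distrib matrix_vector_mult_scaleR)

lemma foldl_eq: "foldl (bk_step A b blk f) (transpose A *v y) is = transpose A *v foldl ystep y is"
  by (induction "is" arbitrary: y) (simp_all add: bk_step_eq del: transpose_matrix_vector)

lemma bk_d_eq: "bk_d A b blk f is = transpose A *v foldl ystep 0 is"
  unfolding bk_d_def using foldl_eq[of 0 "is"] by simp

end



context bk begin

lemma ismaxX: "ismax f z (X z)" by (rule grad_ismax[OF f_sc])

lemma Psi_eq: "Ps y = fconj f (transpose A *v y) - b \<bullet> y"
  by (simp add: Psi_def del: transpose_matrix_vector)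

lemma tA_inner: "(transpose A *v y) \<bullet> x = y \<bullet> (A *v x)"
  by (simp add: dot_lmul_matrix)

lemma psi_descent:
  assumes i: "i < M"
  shows "Ps (ystep y i) \<le> Ps y - (norm (P i (g y)))\<^sup>2 / (2 * L i)"
proof -
  define z where "z = transpose A *v y"
  define w where "w = P i (g y)"
  define c where "c = 1 / L i"
  have L0: "L i > 0" by (rule L_pos[OF i])
  have ys: "ystep y i = y - c *\<^sub>R w" by (simp add: ystep_def c_def w_def)
  define z' where "z' = transpose A *v (y - c *\<^sub>R w)"
  have z'z: "z' - z = - (c *\<^sub>R (transpose A *v w))"
    by (simp add: z'_def z_def matrix_vector_mult_diff_distrib matrix_vector_mult_scaleR del: transpose_matrix_vector)
  have up: "fconj f z' \<le> fconj f z + (z' - z) \<bullet> X z + (norm (z' - z))\<^sup>2 / 2"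
    by (rule conj_upper[OF f_sc ismaxX])
  have t1: "(z' - z) \<bullet> X z = - c * (w \<bullet> (A *v X z))"
    unfolding z'z by (simp add: tA_inner del: transpose_matrix_vector)
  have gw: "w \<bullet> (A *v X z) - w \<bullet> b = (norm w)\<^sup>2"
  proof -
    have "w \<bullet> (A *v X z) - w \<bullet> b = w \<bullet> g y" by (simp add: g_def z_def inner_diff_right)
    also have "\<dots> = w \<bullet> w" unfolding w_def by (subst inner_P2) (simp add: P_idem)
    finally show ?thesis by (simp add: power2_norm_eq_inner)
  qed
  have nb: "norm (transpose A *v w) \<le> spec_norm (blockmat A blk i) * norm w"
  proof -
    have "transpose A *v w = transpose (blockmat A blk i) *v w"
      unfolding B2 w_def P_idem ..
    then show ?thesis using transpose_bound[of "blockmat A blk i" w] by simp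
  qed
  have sn0: "spec_norm (blockmat A blk i) \<ge> 0" unfolding spec_norm_def by (intro onorm_pos_le) auto
  have "(norm (transpose A *v w))\<^sup>2 \<le> (spec_norm (blockmat A blk i) * norm w)\<^sup>2"
    using nb by (intro power_mono) auto
  then have nb2: "(norm (transpose A *v w))\<^sup>2 \<le> L i * (norm w)\<^sup>2"
    by (simp add: Lblk_def power_mult_distrib)
  have "(norm (z' - z))\<^sup>2 = c\<^sup>2 * (norm (transpose A *v w))\<^sup>2"
    using L0 unfolding z'z by (simp add: power_mult_distrib c_def power_divide del: transpose_matrix_vector)
  also have "\<dots> \<le> c\<^sup>2 * (L i * (norm w)\<^sup>2)" using nb2 by (intro mult_left_mono) auto
  finally have q: "(norm (z' - z))\<^sup>2 \<le> c\<^sup>2 * (L i * (norm w)\<^sup>2)" .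
  have "Ps (ystep y i) = fconj f z' - b \<bullet> y + c * (b \<bullet> w)"
    unfolding Psi_eq ys z'_def by (simp add: inner_diff_right)
  also have "\<dots> \<le> fconj f z - b \<bullet> y - c * (w \<bullet> (A *v X z) - w \<bullet> b) + c\<^sup>2 * (L i * (norm w)\<^sup>2) / 2"
    using up t1 q by (simp add: inner_commute algebra_simps)
  also have "\<dots> = Ps y - c * (norm w)\<^sup>2 + c\<^sup>2 * (L i * (norm w)\<^sup>2) / 2"
  proof -
    have "Ps y = fconj f z - b \<bullet> y" by (simp add: Psi_eq z_def del: transpose_matrix_vector)
    then show ?thesis using gw by simp
  qed
  also have "\<dots> = Ps y - (norm w)\<^sup>2 / (2 * L i)"
    using L0 by (simp add: c_def power2_eq_square field_simps)
  finally show ?thesis by (simp add: w_def)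
qed

lemma psi_mono: "i < M \<Longrightarrow> Ps (ystep y i) \<le> Ps y"
  using psi_descent[of i y] L_pos[of i] by (smt (verit) divide_nonneg_pos zero_le_power2)

lemma weak_dual: "Ps y + f xhat \<ge> 0"
  using fenchel_young[OF f_sc, of "transpose A *v y" xhat]
  unfolding Psi_eq tA_inner xhat_feas by (simp add: inner_commute)

lemma g_zero:
  assumes yh: "yh \<in> Ystar A b f"
  shows "g yh = 0"
proof -
  have "P i (g yh) = 0" if i: "i < M" for i
  proof -
    have "Ps yh \<le> Ps (ystep yh i)" using yh by (simp add: Ystar_def)
    with psi_descent[OF i, of yh] have "(norm (P i (g yh)))\<^sup>2 / (2 * L i) \<le> 0" by simp
    moreover have "L i > 0" by (rule L_pos[OF i])
    ultimately have "(norm (P i (g yh)))\<^sup>2 \<le> 0" by (simp add: divide_le_0_iff)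
    then show ?thesis by simp
  qed
  then have "(\<Sum>i<M. P i (g yh)) = 0" by simp
  then show ?thesis by (simp add: sum_P)
qed

lemma strong_dual:
  assumes yh: "yh \<in> Ystar A b f"
  shows "Ps yh + f xhat \<le> 0"
proof -
  define z where "z = transpose A *v yh"
  have AX: "A *v X z = b" using g_zero[OF yh] by (simp add: g_def z_def del: transpose_matrix_vector)
  have "Ps yh = z \<bullet> X z - f (X z) - b \<bullet> yh"
    unfolding Psi_eq z_def[symmetric] using ismax_conj[OF ismaxX] by simp
  also have "z \<bullet> X z = yh \<bullet> (A *v X z)" unfolding z_def by (rule tA_inner)
  also have "\<dots> = yh \<bullet> b" unfolding AX ..
  finally have "Ps yh = - f (X z)" by (simp add: inner_commute)
  moreover have "f xhat \<le> f (X z)" using xhat_min AX by blast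
  ultimately show ?thesis by simp
qed

lemma conv_ineq:
  assumes yh: "yh \<in> Ystar A b f"
  shows "Ps y + f xhat \<le> g y \<bullet> (y - yh)"
proof -
  define z where "z = transpose A *v y"
  have lo: "fconj f (transpose A *v yh) \<ge> fconj f z + (transpose A *v yh - z) \<bullet> X z"
    by (rule conj_lower[OF f_sc ismaxX])
  have "(transpose A *v yh - z) \<bullet> X z = (yh - y) \<bullet> (A *v X z)"
    by (simp add: z_def inner_diff_left dot_lmul_matrix)
  then have "Ps yh \<ge> Ps y + (yh - y) \<bullet> (A *v X z) - b \<bullet> (yh - y)"
    using lo unfolding Psi_eq z_def by (simp add: inner_diff_right inner_commute)
  moreover have "(yh - y) \<bullet> (A *v X z) - b \<bullet> (yh - y) = - (g y \<bullet> (y - yh))"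
    by (simp add: g_def z_def inner_diff_left inner_diff_right inner_commute del: transpose_matrix_vector)
  ultimately show ?thesis using strong_dual[OF yh] by linarith
qed

lemma bregman_eq:
  "bregman f (transpose A *v y) (X (transpose A *v y)) xhat = Ps y + f xhat"
proof -
  define z where "z = transpose A *v y"
  have "bregman f z (X z) xhat = f xhat + (z \<bullet> X z - f (X z)) - z \<bullet> xhat"
    by (simp add: bregman_def inner_diff_right)
  also have "\<dots> = f xhat + fconj f z - y \<bullet> b"
    using ismax_conj[OF ismaxX, of z] by (simp add: z_def tA_inner xhat_feas del: transpose_matrix_vector)
  finally show ?thesis unfolding Psi_eq z_def by (simp add: inner_commute del: transpose_matrix_vector)
qed

lemma bregman_lower: "(norm (X d - xhat))\<^sup>2 / 2 \<le> bregman f d (X d) xhat"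
  using ismax_quad[OF f_sc ismaxX[of d], of xhat]
  by (simp add: bregman_def norm_minus_commute)

end



context bk begin

abbreviation bn where "bn w \<equiv> bnorm A blk M (1 - \<alpha>) w"
definition dist_ys where "dist_ys y = (INF yh\<in>Ystar A b f. bn (y - yh))"
abbreviation R where "R \<equiv> Rbeta A b f blk M (1 - \<alpha>) 0"

lemma bnorm_eq: "bnorm A blk M \<beta> w = sqrt (\<Sum>i<M. L i powr \<beta> * (norm (P i w))\<^sup>2)"
  unfolding bnorm_def normsq_P ..

lemma normP_le: "(norm (P i w))\<^sup>2 \<le> (norm w)\<^sup>2"
proof -
  have "norm (P i w) \<le> norm w"
  proof -
    have "(norm (P i w))\<^sup>2 = P i w \<bullet> w" unfolding inner_P2[where u=w and w=w and i=i] by (simp add: power2_norm_eq_inner)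
    also have "\<dots> \<le> norm (P i w) * norm w" by (rule norm_cauchy_schwarz)
    finally have "norm (P i w) * norm (P i w) \<le> norm (P i w) * norm w" by (simp add: power2_eq_square)
    then show ?thesis by (cases "norm (P i w) = 0") auto
  qed
  then show ?thesis by (intro power_mono) auto
qed

lemma bn_le_norm: "bn w \<le> sqrt (\<Sum>i<M. L i powr (1 - \<alpha>)) * norm w"
proof -
  have "(\<Sum>i<M. L i powr (1 - \<alpha>) * (norm (P i w))\<^sup>2) \<le> (\<Sum>i<M. L i powr (1 - \<alpha>) * (norm w)\<^sup>2)"
    by (intro sum_mono mult_left_mono normP_le) auto
  then have "bn w \<le> sqrt ((\<Sum>i<M. L i powr (1 - \<alpha>)) * (norm w)\<^sup>2)"
    unfolding bnorm_eq by (simp add: sum_distrib_right)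
  also have "\<dots> = sqrt (\<Sum>i<M. L i powr (1 - \<alpha>)) * norm w" by (simp add: real_sqrt_mult)
  finally show ?thesis .
qed

lemma bn_nonneg: "bn w \<ge> 0" unfolding bnorm_def by (intro real_sqrt_ge_zero sum_nonneg mult_nonneg_nonneg sum_nonneg) auto

lemma dist_le: "yh \<in> Ystar A b f \<Longrightarrow> dist_ys y \<le> bn (y - yh)"
  unfolding dist_ys_def by (rule cINF_lower) (auto intro: bdd_belowI[of _ 0] simp: bn_nonneg)

lemma dist_nonneg: "dist_ys y \<ge> 0"
  unfolding dist_ys_def using dual_sol by (intro cINF_greatest) (auto simp: bn_nonneg)

lemma dist_bdd: "bdd_above (dist_ys ` {y. Ps y \<le> Ps 0})"
proof -
  obtain yh0 where yh0: "yh0 \<in> Ystar A b f" using dual_sol by blast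
  obtain K where K0: "K \<ge> 0" and K: "\<And>y. norm (y - xhat) \<le> 1 \<Longrightarrow> \<bar>f y\<bar> \<le> K"
    using sc_ball_bound[OF f_sc, of xhat] by blast
  define V where "V = span (range (\<lambda>x. A *v x))"
  have "\<exists>e>0. \<forall>v\<in>V. norm (transpose A *v v) \<ge> e * norm v"
  proof (rule injective_imp_isometric)
    show "closed V" "subspace V" unfolding V_def by (auto intro: closed_subspace)
    show "bounded_linear ((*v) (transpose A))" by simp
    show "\<forall>v\<in>V. transpose A *v v = 0 \<longrightarrow> v = 0"
    proof (intro ballI impI)
      fix v assume v: "v \<in> V" and T: "transpose A *v v = 0"
      have "orthogonal v u" if "u \<in> range (\<lambda>x. A *v x)" for u
        using that T tA_inner[of v] by (auto simp: orthogonal_def simp del: transpose_matrix_vector)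
      then have "orthogonal v v" using orthogonal_to_span v unfolding V_def by blast
      then show "v = 0" by (simp add: orthogonal_def)
    qed
  qed
  then obtain e where e0: "e > 0" and e: "\<And>v. v \<in> V \<Longrightarrow> norm (transpose A *v v) \<ge> e * norm v" by blast
  define w0 where "w0 = transpose A *v yh0"
  define C where "C = sqrt (\<Sum>i<M. L i powr (1 - \<alpha>)) * ((Ps 0 + norm w0 + K) / e)"
  have "dist_ys y \<le> C" if y: "Ps y \<le> Ps 0" for y
  proof -
    define w where "w = transpose A *v y"
    have coer: "norm (w - w0) \<le> Ps y + norm w0 + K"
    proof (cases "w = w0")
      case True
      have "0 \<le> Ps y + f xhat" "\<bar>f xhat\<bar> \<le> K" "norm w0 \<ge> 0" using weak_dual[of y] K[of xhat] by auto
      then show ?thesis using True by (simp add: abs_le_iff; linarith)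
    next
      case False
      define s where "s = (1 / norm (w - w0)) *\<^sub>R (w - w0)"
      have ns: "norm s = 1" using False by (simp add: s_def)
      have fy: "w \<bullet> (xhat + s) - f (xhat + s) \<le> fconj f w" by (rule fenchel_young[OF f_sc])
      have Psy0: "Ps y = fconj f w - b \<bullet> y" unfolding w_def by (rule Psi_eq)
      have "w \<bullet> xhat = y \<bullet> (A *v xhat)" unfolding w_def by (rule tA_inner)
      then have "b \<bullet> y = w \<bullet> xhat" by (simp add: xhat_feas inner_commute)
      with Psy0 have Psy: "Ps y = fconj f w - w \<bullet> xhat" by simp
      have ws: "(w - w0) \<bullet> s = norm (w - w0)" using False
        by (simp add: s_def power2_norm_eq_inner[symmetric] power2_eq_square)
      have "w0 \<bullet> s \<ge> - norm w0" using norm_cauchy_schwarz[of "-w0" s] ns by simp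
      moreover have "f (xhat + s) \<le> K" using K[of "xhat + s"] ns by simp
      moreover have "w \<bullet> (xhat + s) = w \<bullet> xhat + (w - w0) \<bullet> s + w0 \<bullet> s"
        by (simp add: inner_add_right inner_diff_left)
      ultimately show ?thesis using fy Psy ws by linarith
    qed
    obtain u z where u: "u \<in> V" and z: "\<And>v. v \<in> V \<Longrightarrow> orthogonal z v" and uz: "y - yh0 = u + z"
      using orthogonal_subspace_decomp_exists[of "range (\<lambda>x. A *v x)" "y - yh0"] unfolding V_def by blast
    have zA: "z \<bullet> (A *v x) = 0" for x
      using z[of "A *v x"] unfolding V_def by (auto simp: orthogonal_def intro: span_base)
    have Tz: "transpose A *v z = 0"
      using zA[of "transpose A *v z"] tA_inner[of z "transpose A *v z"] by (simp del: transpose_matrix_vector)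
    have yh': "yh0 + z \<in> Ystar A b f"
    proof -
      have "Ps (yh0 + z) = Ps yh0"
        unfolding Psi_eq using Tz zA[of xhat] xhat_feas
        by (simp add: matrix_vector_right_distrib inner_add_right inner_commute del: transpose_matrix_vector)
      then show ?thesis using yh0 by (simp add: Ystar_def)
    qed
    have "dist_ys y \<le> bn (y - (yh0 + z))" by (rule dist_le[OF yh'])
    also have "y - (yh0 + z) = u" using uz by (simp add: algebra_simps)
    also have "bn u \<le> sqrt (\<Sum>i<M. L i powr (1 - \<alpha>)) * norm u" by (rule bn_le_norm)
    also have "norm u \<le> (Ps 0 + norm w0 + K) / e"
    proof -
      have "w - w0 = transpose A *v (y - yh0)"
        by (simp add: w_def w0_def matrix_vector_mult_diff_distrib del: transpose_matrix_vector)
      also have "\<dots> = transpose A *v u" unfolding uz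
        by (simp add: matrix_vector_right_distrib Tz del: transpose_matrix_vector)
      finally have "transpose A *v u = w - w0" by simp
      then have "e * norm u \<le> norm (w - w0)" using e[OF u] by simp
      also have "\<dots> \<le> Ps 0 + norm w0 + K" using coer y by linarith
      finally show ?thesis using e0 by (simp add: field_simps)
    qed
    then have "sqrt (\<Sum>i<M. L i powr (1 - \<alpha>)) * norm u \<le> C"
      unfolding C_def by (intro mult_left_mono real_sqrt_ge_zero sum_nonneg) auto
    finally show ?thesis .
  qed
  then show ?thesis by (intro bdd_aboveI[of _ C]) auto
qed

lemma dist_le_R: "Ps y \<le> Ps 0 \<Longrightarrow> dist_ys y \<le> R"
  unfolding Rbeta_def dist_ys_def[symmetric]
  by (rule cSUP_upper) (use dist_bdd in auto)

end



lemma cs_plain: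
  assumes "\<And>i. i \<in> I \<Longrightarrow> a i \<ge> 0" "\<And>i. i \<in> I \<Longrightarrow> c i \<ge> 0"
  shows "(\<Sum>i\<in>I. a i * c i) \<le> sqrt (\<Sum>i\<in>I. (a i)\<^sup>2) * sqrt (\<Sum>i\<in>I. (c i)\<^sup>2)"
proof -
  have "(\<Sum>i\<in>I. a i * c i) = (\<Sum>i\<in>I. \<bar>a i\<bar> * \<bar>c i\<bar>)" using assms by (intro sum.cong) auto
  also have "\<dots> \<le> L2_set a I * L2_set c I" by (rule L2_set_mult_ineq)
  finally show ?thesis by (simp add: L2_set_def)
qed

context bk begin

definition S where "S = (\<Sum>j<M. L j powr \<alpha>)"
definition G where "G y = sqrt (\<Sum>i<M. L i powr (\<alpha> - 1) * (norm (P i (g y)))\<^sup>2)"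
definition pr where "pr i = prob_blk A blk M \<alpha> i"

lemma M_pos: "M > 0" using blk_range by (metis gr_zeroI not_less0)

lemma S_pos: "S > 0"
proof -
  have "L 0 powr \<alpha> > 0" using L_pos[OF M_pos] by simp
  moreover have "L 0 powr \<alpha> \<le> S" unfolding S_def using M_pos
    by (intro member_le_sum) auto
  ultimately show ?thesis by linarith
qed

lemma pr_sum: "(\<Sum>i<M. pr i) = 1"
  using S_pos by (simp add: pr_def prob_blk_def sum_divide_distrib[symmetric] S_def[symmetric])

lemma pr_nonneg: "pr i \<ge> 0"
  using S_pos by (simp add: pr_def prob_blk_def S_def[symmetric])

lemma E1:
  assumes yh: "yh \<in> Ystar A b f"
  shows "Ps y + f xhat \<le> G y * bn (y - yh)"
proof -
  define w where "w = y - yh"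
  have "Ps y + f xhat \<le> g y \<bullet> w" unfolding w_def by (rule conv_ineq[OF yh])
  also have "\<dots> = (\<Sum>i<M. P i (g y) \<bullet> P i w)" by (rule inner_blocks)
  also have "\<dots> \<le> (\<Sum>i<M. norm (P i (g y)) * norm (P i w))"
    by (intro sum_mono norm_cauchy_schwarz)
  also have "\<dots> = (\<Sum>i<M. (sqrt (L i powr (\<alpha> - 1)) * norm (P i (g y))) * (sqrt (L i powr (1 - \<alpha>)) * norm (P i w)))"
  proof (rule sum.cong[OF refl])
    fix i assume "i \<in> {..<M}"
    then have Li: "L i > 0" using L_pos by simp
    have "sqrt (L i powr (\<alpha> - 1)) * sqrt (L i powr (1 - \<alpha>)) = 1"
      using Li by (simp add: real_sqrt_mult[symmetric] powr_add[symmetric])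
    then show "norm (P i (g y)) * norm (P i w) = (sqrt (L i powr (\<alpha> - 1)) * norm (P i (g y))) * (sqrt (L i powr (1 - \<alpha>)) * norm (P i w))"
      by (metis (no_types, lifting) mult.assoc mult.left_commute mult_1)
  qed
  also have "\<dots> \<le> sqrt (\<Sum>i<M. (sqrt (L i powr (\<alpha> - 1)) * norm (P i (g y)))\<^sup>2) * sqrt (\<Sum>i<M. (sqrt (L i powr (1 - \<alpha>)) * norm (P i w))\<^sup>2)"
    by (rule cs_plain) auto
  also have "\<dots> = G y * bn w"
    unfolding G_def bnorm_eq by (simp add: power_mult_distrib)
  finally show ?thesis by (simp add: w_def)
qed

lemma G_nonneg: "G y \<ge> 0" unfolding G_def by (intro real_sqrt_ge_zero sum_nonneg mult_nonneg_nonneg) auto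

lemma E2: "Ps y + f xhat \<le> G y * dist_ys y"
proof (cases "G y = 0")
  case True
  obtain yh where "yh \<in> Ystar A b f" using dual_sol by blast
  then show ?thesis using E1[of yh y] True by simp
next
  case False
  then have G0: "G y > 0" using G_nonneg[of y] by simp
  have "(Ps y + f xhat) / G y \<le> dist_ys y"
    unfolding dist_ys_def using dual_sol
  proof (intro cINF_greatest)
    fix yh assume "yh \<in> Ystar A b f"
    then show "(Ps y + f xhat) / G y \<le> bn (y - yh)" using E1[of yh y] G0 by (simp add: divide_le_eq mult.commute)
  qed auto
  then show ?thesis using G0 by (simp add: divide_le_eq mult.commute)
qed

lemma E3:
  assumes "Ps y \<le> Ps 0"
  shows "(Ps y + f xhat)\<^sup>2 \<le> (G y)\<^sup>2 * R\<^sup>2"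
proof -
  have "Ps y + f xhat \<le> G y * R"
    using E2[of y] dist_le_R[OF assms] G_nonneg[of y] by (meson mult_left_mono order_trans)
  then have "(Ps y + f xhat)\<^sup>2 \<le> (G y * R)\<^sup>2" using weak_dual[of y] by (intro power_mono) auto
  then show ?thesis by (simp add: power_mult_distrib)
qed

lemma E4: "(\<Sum>i<M. pr i * Ps (ystep y i)) \<le> Ps y - (G y)\<^sup>2 / (2 * S)"
proof -
  have "(\<Sum>i<M. pr i * Ps (ystep y i)) \<le> (\<Sum>i<M. pr i * (Ps y - (norm (P i (g y)))\<^sup>2 / (2 * L i)))"
    by (intro sum_mono mult_left_mono psi_descent pr_nonneg) auto
  also have "\<dots> = (\<Sum>i<M. pr i) * Ps y - (\<Sum>i<M. L i powr (\<alpha> - 1) * (norm (P i (g y)))\<^sup>2) / (2 * S)"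
  proof -
    have "pr i * ((norm (P i (g y)))\<^sup>2 / (2 * L i)) = L i powr (\<alpha> - 1) * (norm (P i (g y)))\<^sup>2 / (2 * S)"
      if "i < M" for i
    proof -
      have Li: "L i > 0" using L_pos that by simp
      have "L i powr (\<alpha> - 1) = L i powr \<alpha> / L i" using Li by (simp add: powr_diff)
      then show ?thesis using Li S_pos by (simp add: pr_def prob_blk_def S_def[symmetric] field_simps)
    qed
    then show ?thesis
      by (simp add: right_diff_distrib sum_subtractf sum_distrib_right sum_divide_distrib)
  qed
  also have "\<dots> = Ps y - (G y)\<^sup>2 / (2 * S)"
    unfolding pr_sum G_def by (subst real_sqrt_pow2) (auto intro!: sum_nonneg)
  finally show ?thesis .
qed

lemma E5:
  assumes "Ps y \<le> Ps 0"
  shows "(Ps y + f xhat)\<^sup>2 \<le> 2 * S * R\<^sup>2 * ((Ps y + f xhat) - (\<Sum>i<M. pr i * (Ps (ystep y i) + f xhat)))"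
proof -
  have "(\<Sum>i<M. pr i * (Ps (ystep y i) + f xhat)) = (\<Sum>i<M. pr i * Ps (ystep y i)) + f xhat"
    using pr_sum by (simp add: distrib_left sum.distrib sum_distrib_right[symmetric])
  then have "(Ps y + f xhat) - (\<Sum>i<M. pr i * (Ps (ystep y i) + f xhat)) \<ge> (G y)\<^sup>2 / (2 * S)"
    using E4[of y] by linarith
  then have "2 * S * ((Ps y + f xhat) - (\<Sum>i<M. pr i * (Ps (ystep y i) + f xhat))) \<ge> (G y)\<^sup>2"
    using S_pos by (simp add: field_simps)
  then have "R\<^sup>2 * (2 * S * ((Ps y + f xhat) - (\<Sum>i<M. pr i * (Ps (ystep y i) + f xhat)))) \<ge> R\<^sup>2 * (G y)\<^sup>2"
    by (intro mult_left_mono) auto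
  with E3[OF assms] show ?thesis by (simp add: algebra_simps)
qed

lemma C2: "norm (transpose A *v w) \<le> sqrt S * bn w"
proof -
  have "transpose A *v w = transpose A *v (\<Sum>i<M. P i w)" by (simp only: sum_P)
  also have "\<dots> = (\<Sum>i<M. transpose A *v P i w)"
    using linear_sum[OF matrix_vector_mul_linear, of "transpose A" "\<lambda>i. P i w" "{..<M}"] by (simp add: o_def del: transpose_matrix_vector)
  finally have "transpose A *v w = (\<Sum>i<M. transpose A *v P i w)" .
  then have "norm (transpose A *v w) \<le> (\<Sum>i<M. norm (transpose A *v P i w))"
    by (simp add: norm_sum del: transpose_matrix_vector)
  also have "\<dots> \<le> (\<Sum>i<M. sqrt (L i powr \<alpha>) * (sqrt (L i powr (1 - \<alpha>)) * norm (P i w)))"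
  proof (rule sum_mono)
    fix i assume "i \<in> {..<M}"
    then have Li: "L i > 0" using L_pos by simp
    have sn: "spec_norm (blockmat A blk i) = sqrt (L i)"
    proof -
      have "spec_norm (blockmat A blk i) \<ge> 0" unfolding spec_norm_def by (intro onorm_pos_le) auto
      then show ?thesis by (simp add: Lblk_def)
    qed
    have "transpose A *v P i w = transpose (blockmat A blk i) *v P i w" by (simp only: B2 P_idem)
    then have "norm (transpose A *v P i w) \<le> sqrt (L i) * norm (P i w)"
      using transpose_bound[of "blockmat A blk i" "P i w"] sn by (simp del: transpose_matrix_vector)
    also have "sqrt (L i) = sqrt (L i powr \<alpha>) * sqrt (L i powr (1 - \<alpha>))"
      using Li by (simp add: real_sqrt_mult[symmetric] powr_add[symmetric])
    finally show "norm (transpose A *v P i w) \<le> sqrt (L i powr \<alpha>) * (sqrt (L i powr (1 - \<alpha>)) * norm (P i w))"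
      by (simp add: mult.assoc)
  qed
  also have "\<dots> \<le> sqrt (\<Sum>i<M. (sqrt (L i powr \<alpha>))\<^sup>2) * sqrt (\<Sum>i<M. (sqrt (L i powr (1 - \<alpha>)) * norm (P i w))\<^sup>2)"
    by (rule cs_plain) auto
  also have "\<dots> = sqrt S * bn w"
    unfolding S_def bnorm_eq by (simp add: power_mult_distrib)
  finally show ?thesis .
qed

lemma E6: "Ps 0 + f xhat \<le> S * R\<^sup>2 / 2"
proof -
  have key: "sqrt (2 * (Ps 0 + f xhat) / S) \<le> bn (0 - yh)" if yh: "yh \<in> Ystar A b f" for yh
  proof -
    define z where "z = transpose A *v yh"
    have AX: "A *v X z = b" using g_zero[OF yh] by (simp add: g_def z_def del: transpose_matrix_vector)
    have up: "fconj f 0 \<le> fconj f z + (0 - z) \<bullet> X z + (norm (0 - z))\<^sup>2 / 2"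
      by (rule conj_upper[OF f_sc ismaxX])
    have "z \<bullet> X z = yh \<bullet> (A *v X z)" unfolding z_def by (rule tA_inner)
    then have zX: "z \<bullet> X z = yh \<bullet> b" using AX by simp
    have P0: "Ps 0 = fconj f 0" by (simp add: Psi_def)
    have Pyh: "Ps yh = fconj f z - b \<bullet> yh" unfolding z_def by (rule Psi_eq)
    have "Ps 0 + f xhat \<le> (norm z)\<^sup>2 / 2"
      using up zX P0 Pyh strong_dual[OF yh] by (simp add: inner_commute)
    also have "norm z \<le> sqrt S * bn (0 - yh)"
      using C2[of "0 - yh"] linear_neg[OF matrix_vector_mul_linear, of "transpose A" yh] by (simp add: z_def del: transpose_matrix_vector)
    then have "(norm z)\<^sup>2 \<le> (sqrt S * bn (0 - yh))\<^sup>2" by (intro power_mono) auto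
    finally have "Ps 0 + f xhat \<le> S * (bn (0 - yh))\<^sup>2 / 2"
      using S_pos by (simp add: power_mult_distrib)
    then have "2 * (Ps 0 + f xhat) / S \<le> (bn (0 - yh))\<^sup>2" using S_pos by (simp add: field_simps)
    then have "sqrt (2 * (Ps 0 + f xhat) / S) \<le> sqrt ((bn (0 - yh))\<^sup>2)" by (rule real_sqrt_le_mono)
    then show ?thesis using bn_nonneg by simp
  qed
  have "sqrt (2 * (Ps 0 + f xhat) / S) \<le> dist_ys 0"
    unfolding dist_ys_def using dual_sol key by (intro cINF_greatest) auto
  also have "\<dots> \<le> R" by (rule dist_le_R) simp
  finally have "sqrt (2 * (Ps 0 + f xhat) / S) \<le> R" .
  moreover have h0: "0 \<le> 2 * (Ps 0 + f xhat) / S" using weak_dual[of 0] S_pos by simp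
  ultimately have "(sqrt (2 * (Ps 0 + f xhat) / S))\<^sup>2 \<le> R\<^sup>2" by (rule power_mono[OF _ real_sqrt_ge_zero])
  moreover have "(sqrt (2 * (Ps 0 + f xhat) / S))\<^sup>2 = 2 * (Ps 0 + f xhat) / S"
    using weak_dual[of 0] S_pos by simp
  ultimately show ?thesis using S_pos by (simp add: field_simps)
qed

end



lemma jensen_sq:
  fixes w a :: "'a \<Rightarrow> real"
  assumes "\<And>x. x \<in> T \<Longrightarrow> w x \<ge> 0" and "(\<Sum>x\<in>T. w x) = 1"
  shows "(\<Sum>x\<in>T. w x * a x)\<^sup>2 \<le> (\<Sum>x\<in>T. w x * (a x)\<^sup>2)"
proof -
  define m where "m = (\<Sum>x\<in>T. w x * a x)"
  have "0 \<le> (\<Sum>x\<in>T. w x * (a x - m)\<^sup>2)" using assms by (intro sum_nonneg) auto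
  also have "\<dots> = (\<Sum>x\<in>T. w x * (a x)\<^sup>2) - 2 * m * (\<Sum>x\<in>T. w x * a x) + m\<^sup>2 * (\<Sum>x\<in>T. w x)"
    by (simp add: power2_eq_square algebra_simps sum.distrib sum_subtractf sum_distrib_left sum_distrib_right)
  also have "\<dots> = (\<Sum>x\<in>T. w x * (a x)\<^sup>2) - m\<^sup>2" using assms(2) by (simp add: m_def power2_eq_square)
  finally show ?thesis by (simp add: m_def)
qed

lemma psi_diff: "(c::real) > 0 \<Longrightarrow> (bb - bb^2/c) - (a - a^2/c) = (bb - a) * (1 - (a+bb)/c)"
  by (simp add: field_simps power2_eq_square)

lemma rate_rec:
  fixes e :: "nat \<Rightarrow> real"
  assumes c: "c \<ge> 0" and nn: "\<And>k. e k \<ge> 0" and mono: "\<And>k. e (Suc k) \<le> e k"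
    and rec: "\<And>k. (e k)\<^sup>2 \<le> c * (e k - e (Suc k))" and e0: "e 0 \<le> c / 4"
  shows "e k \<le> c / (real k + 4)"
proof (induction k)
  case 0 then show ?case using e0 by simp
next
  case (Suc k)
  define q where "q = real k + 4"
  have q4: "q \<ge> 4" by (simp add: q_def)
  have ek: "e k \<le> c / q" using Suc by (simp add: q_def)
  show ?case
  proof (cases "c = 0")
    case True
    then show ?thesis using ek mono[of k] by simp
  next
    case False
    then have c0: "c > 0" using c by simp
    have "e (Suc k) \<le> e k - (e k)\<^sup>2 / c" using rec[of k] c0 by (simp add: field_simps)
    also have "\<dots> \<le> c / q - (c / q)\<^sup>2 / c"
    proof -
      have "(c / q - (c / q)\<^sup>2 / c) - (e k - (e k)\<^sup>2 / c) = (c / q - e k) * (1 - (e k + c / q) / c)"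
        by (rule psi_diff[OF c0])
      moreover have "e k + c / q \<le> c"
      proof -
        have "c / q \<le> c / 4" using q4 c0 by (intro divide_left_mono) auto
        then show ?thesis using ek c0 by linarith
      qed
      then have "1 - (e k + c / q) / c \<ge> 0" using c0 by (simp add: field_simps)
      ultimately show ?thesis using ek by (smt (verit) mult_nonneg_nonneg)
    qed
    also have "\<dots> \<le> c / (q + 1)"
    proof -
      have "c / q - (c / q)\<^sup>2 / c = c * (q - 1) / q\<^sup>2" using c0 q4 by (simp add: field_simps power2_eq_square)
      also have "\<dots> \<le> c / (q + 1)"
      proof -
        have "(q - 1) * (q + 1) \<le> q * q" by (simp add: algebra_simps)
        then have h: "(q - 1) / q\<^sup>2 \<le> 1 / (q + 1)" using q4 by (simp add: field_simps power2_eq_square)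
        have "c * ((q - 1) / q\<^sup>2) \<le> c * (1 / (q + 1))" using c0 h by (intro mult_left_mono) auto
        then show ?thesis by simp
      qed
      finally show ?thesis .
    qed
    finally show ?thesis by (simp add: q_def add.commute add.left_commute)
  qed
qed

context bk begin

abbreviation Sk where "Sk k \<equiv> {is. length is = k \<and> set is \<subseteq> {..<M}}"
abbreviation E where "E k h \<equiv> expect_k A blk M \<alpha> k h"
abbreviation wt where "wt is \<equiv> prod_list (map (prob_blk A blk M \<alpha>) is)"
definition ys where "ys is = foldl ystep 0 is"
definition Dl where "Dl y = Ps y + f xhat"

lemma Sk_finite: "finite (Sk k)"
  using finite_lists_length_eq[of "{..<M}" k] by (simp add: conj_commute)

lemma wt_nonneg: "wt is \<ge> 0"
  by (rule prod_list_nonneg) (auto simp: pr_nonneg[unfolded pr_def])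

lemma Sk_Suc: "Sk (Suc k) = (\<lambda>(is, i). is @ [i]) ` (Sk k \<times> {..<M})"
proof (rule set_eqI, rule iffI)
  fix xs assume "xs \<in> Sk (Suc k)"
  then have "xs \<noteq> []" "length xs = Suc k" "set xs \<subseteq> {..<M}" by auto
  then obtain ys' y where "xs = ys' @ [y]" by (metis rev_exhaust)
  then show "xs \<in> (\<lambda>(is, i). is @ [i]) ` (Sk k \<times> {..<M})"
    using \<open>length xs = Suc k\<close> \<open>set xs \<subseteq> {..<M}\<close> by (auto intro!: image_eqI[of _ _ "(ys', y)"])
qed auto

lemma E_Suc: "E (Suc k) h = E k (\<lambda>is. \<Sum>i<M. pr i * h (is @ [i]))"
proof -
  have inj: "inj_on (\<lambda>(is, i). is @ [i]) (Sk k \<times> {..<M})"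
    by (auto simp: inj_on_def)
  have "E (Suc k) h = (\<Sum>p\<in>Sk k \<times> {..<M}. wt (fst p @ [snd p]) * h (fst p @ [snd p]))"
    unfolding expect_k_def Sk_Suc by (subst sum.reindex[OF inj]) (simp add: case_prod_beta)
  also have "\<dots> = (\<Sum>is\<in>Sk k. \<Sum>i<M. wt (is @ [i]) * h (is @ [i]))"
    by (subst sum.cartesian_product) (simp add: case_prod_beta)
  also have "\<dots> = (\<Sum>is\<in>Sk k. wt is * (\<Sum>i<M. pr i * h (is @ [i])))"
    by (simp add: sum_distrib_left pr_def mult.assoc)
  finally show ?thesis unfolding expect_k_def .
qed

lemma Sk0: "{is. length is = 0 \<and> set is \<subseteq> {..<M}} = {[]}" "{is. is = [] \<and> set is \<subseteq> {..<M}} = {[]}" by auto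

lemma E_one: "E k (\<lambda>_. 1) = 1"
proof (induction k)
  case 0
  have "{is. length is = 0 \<and> set is \<subseteq> {..<M}} = {[]}" by auto
  then show ?case by (simp add: expect_k_def)
next
  case (Suc k) then show ?case by (simp add: E_Suc pr_sum)
qed

lemma E_mono: "(\<And>is. is \<in> Sk k \<Longrightarrow> h1 is \<le> h2 is) \<Longrightarrow> E k h1 \<le> E k h2"
  unfolding expect_k_def by (intro sum_mono mult_left_mono wt_nonneg) auto

lemma E_linear: "E k (\<lambda>is. a * h1 is + bb * h2 is) = a * E k h1 + bb * E k h2"
  unfolding expect_k_def by (simp add: sum.distrib sum_distrib_left algebra_simps)

lemma E_jensen: "(E k h)\<^sup>2 \<le> E k (\<lambda>is. (h is)\<^sup>2)"
  unfolding expect_k_def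
  by (rule jensen_sq) (use wt_nonneg E_one[of k] in \<open>auto simp: expect_k_def\<close>)

lemma ys_snoc: "ys (is @ [i]) = ystep (ys is) i" by (simp add: ys_def)

lemma ys_level: "set is \<subseteq> {..<M} \<Longrightarrow> Ps (ys is) \<le> Ps 0"
proof (induction "is" rule: rev_induct)
  case Nil then show ?case by (simp add: ys_def)
next
  case (snoc i "is")
  then have "Ps (ystep (ys is) i) \<le> Ps (ys is)" by (intro psi_mono) auto
  then show ?case using snoc by (simp add: ys_snoc)
qed

definition ee where "ee k = E k (\<lambda>is. Dl (ys is))"

lemma ee_Suc: "ee (Suc k) = E k (\<lambda>is. \<Sum>i<M. pr i * Dl (ystep (ys is) i))"
  unfolding ee_def E_Suc ys_snoc ..

lemma ee_nonneg: "ee k \<ge> 0"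
proof -
  have "E k (\<lambda>_. 0) \<le> ee k" unfolding ee_def using weak_dual by (intro E_mono) (simp add: Dl_def)
  then show ?thesis by (simp add: expect_k_def)
qed

lemma ee_mono: "ee (Suc k) \<le> ee k"
  unfolding ee_Suc unfolding ee_def
proof (rule E_mono)
  fix "is" assume "is" : "is \<in> Sk k"
  have "(\<Sum>i<M. pr i * Dl (ystep (ys is) i)) \<le> (\<Sum>i<M. pr i * Dl (ys is))"
    by (intro sum_mono mult_left_mono pr_nonneg) (auto simp: Dl_def psi_mono)
  also have "\<dots> = Dl (ys is)" by (simp add: sum_distrib_right[symmetric] pr_sum)
  finally show "(\<Sum>i<M. pr i * Dl (ystep (ys is) i)) \<le> Dl (ys is)" .
qed

lemma ee_rec: "(ee k)\<^sup>2 \<le> (2 * S * R\<^sup>2) * (ee k - ee (Suc k))"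
proof -
  have "(ee k)\<^sup>2 \<le> E k (\<lambda>is. (Dl (ys is))\<^sup>2)" unfolding ee_def by (rule E_jensen)
  also have "\<dots> \<le> E k (\<lambda>is. (2 * S * R\<^sup>2) * Dl (ys is) + (- (2 * S * R\<^sup>2)) * (\<Sum>i<M. pr i * Dl (ystep (ys is) i)))"
  proof (rule E_mono)
    fix "is" assume "is \<in> Sk k"
    then have "Ps (ys is) \<le> Ps 0" by (intro ys_level) auto
    from E5[OF this] show "(Dl (ys is))\<^sup>2 \<le> (2 * S * R\<^sup>2) * Dl (ys is) + (- (2 * S * R\<^sup>2)) * (\<Sum>i<M. pr i * Dl (ystep (ys is) i))"
      by (simp add: Dl_def algebra_simps)
  qed
  also have "\<dots> = (2 * S * R\<^sup>2) * (ee k - ee (Suc k))"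
    unfolding E_linear ee_Suc unfolding ee_def by (simp add: algebra_simps)
  finally show ?thesis .
qed

lemma ee_bound: "ee k \<le> 2 * S * R\<^sup>2 / (real k + 4)"
proof (rule rate_rec)
  show "0 \<le> 2 * S * R\<^sup>2" using S_pos by simp
  show "ee 0 \<le> 2 * S * R\<^sup>2 / 4"
    using E6 by (simp add: ee_def expect_k_def ys_def Dl_def Sk0)
qed (auto intro: ee_nonneg ee_mono ee_rec)

lemma bregman_ys: "bregman f (bk_d A b blk f is) (bk_x A b blk f is) xhat = Dl (ys is)"
  unfolding bk_x_def bk_d_eq ys_def[symmetric] Dl_def using bregman_eq[of "ys is"]
  by (simp del: transpose_matrix_vector)

lemma main:
  "1/2 * E k (\<lambda>is. (norm (bk_x A b blk f is - xhat))\<^sup>2)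
       \<le> E k (\<lambda>is. bregman f (bk_d A b blk f is) (bk_x A b blk f is) xhat)
   \<and> E k (\<lambda>is. bregman f (bk_d A b blk f is) (bk_x A b blk f is) xhat)
       \<le> 2 * real M * Lbar A blk M \<alpha> / (real k + 4) * R\<^sup>2"
proof
  have "1/2 * E k (\<lambda>is. (norm (bk_x A b blk f is - xhat))\<^sup>2) = E k (\<lambda>is. 1/2 * (norm (bk_x A b blk f is - xhat))\<^sup>2)"
    by (simp add: expect_k_def sum_distrib_left algebra_simps)
  also have "\<dots> \<le> E k (\<lambda>is. bregman f (bk_d A b blk f is) (bk_x A b blk f is) xhat)"
    by (rule E_mono) (use bregman_lower in \<open>simp add: bk_x_def\<close>)
  finally show "1/2 * E k (\<lambda>is. (norm (bk_x A b blk f is - xhat))\<^sup>2)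
       \<le> E k (\<lambda>is. bregman f (bk_d A b blk f is) (bk_x A b blk f is) xhat)" .
  have "2 * real M * Lbar A blk M \<alpha> = 2 * S" using M_pos by (simp add: Lbar_def S_def)
  then have eq: "2 * real M * Lbar A blk M \<alpha> / (real k + 4) * R\<^sup>2 = 2 * S * R\<^sup>2 / (real k + 4)" by simp
  show "E k (\<lambda>is. bregman f (bk_d A b blk f is) (bk_x A b blk f is) xhat)
       \<le> 2 * real M * Lbar A blk M \<alpha> / (real k + 4) * R\<^sup>2"
    unfolding eq bregman_ys using ee_bound[of k] unfolding ee_def .
qed

end

theorem theorem1:
  fixes A :: "real^'n^'m" and b :: "real^'m" and f :: "real^'n \<Rightarrow> real"
    and blk :: "'m \<Rightarrow> nat" and M :: nat and \<alpha> :: real and xhat :: "real^'n"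
  assumes rows_nonzero: "\<forall>r. A $ r \<noteq> 0"
    and b_range: "b \<in> range (\<lambda>x. A *v x)"
    and f_sc: "strongly_convex1 f"
    and blk_range: "\<forall>r. blk r < M"
    and blk_nonempty: "\<forall>i<M. \<exists>r. blk r = i"
    and alpha: "0 \<le> \<alpha>" "\<alpha> \<le> 1"
    and xhat_feas: "A *v xhat = b"
    and xhat_min: "\<forall>x. A *v x = b \<longrightarrow> f xhat \<le> f x"
    and dual_sol: "Ystar A b f \<noteq> {}"
  shows "\<forall>k::nat.
     1/2 * expect_k A blk M \<alpha> k (\<lambda>is. (norm (bk_x A b blk f is - xhat))\<^sup>2)
       \<le> expect_k A blk M \<alpha> k (\<lambda>is. bregman f (bk_d A b blk f is) (bk_x A b blk f is) xhat)
   \<and> expect_k A blk M \<alpha> k (\<lambda>is. bregman f (bk_d A b blk f is) (bk_x A b blk f is) xhat)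
       \<le> 2 * real M * Lbar A blk M \<alpha> / (real k + 4) * (Rbeta A b f blk M (1 - \<alpha>) 0)\<^sup>2"
proof
  fix k :: nat
  interpret bk A b f blk M \<alpha> xhat
    using assms by unfold_locales auto
  show "1/2 * expect_k A blk M \<alpha> k (\<lambda>is. (norm (bk_x A b blk f is - xhat))\<^sup>2)
       \<le> expect_k A blk M \<alpha> k (\<lambda>is. bregman f (bk_d A b blk f is) (bk_x A b blk f is) xhat)
   \<and> expect_k A blk M \<alpha> k (\<lambda>is. bregman f (bk_d A b blk f is) (bk_x A b blk f is) xhat)
       \<le> 2 * real M * Lbar A blk M \<alpha> / (real k + 4) * (Rbeta A b f blk M (1 - \<alpha>) 0)\<^sup>2"
    by (rule main)
qed



end
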